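(* Let $S$ be a finite set with $|S|=n$ and let $\mathfrak S$ be a collection of subsets of $S$ such that $|r\triangle s|\in\{0,4,6,8\}$ for all $r,s\in\mathfrak S$ (the subsets may have different cardinalities). Then $|\mathfrak S|\le\max_{m\ge0}\big(\mathcal A_{m,n}+\mathcal A_{m+2,n}+\mathcal A_{m+4,n}+\mathcal A_{m+6,n}+\mathcal A_{m+8,n}\big)$.
   Context: For $0\le m\le n$, $\mathcal A_{m,n}$ is the maximal cardinality of a collection of $m$-element subsets of an $n$-element set such that any two members $r,s$ satisfy $|r\triangle s|\in\{0,4,6,8\}$; one sets $\mathcal A_{m,n}=0$ unless $0\le m\le n$. $\triangle$ is symmetric difference. *)

theory Defs
  imports Main
begin

definition sd_admissible :: "'a set set \<Rightarrow> bool" where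
  "sd_admissible F \<longleftrightarrow>
     (\<forall>r\<in>F. \<forall>s\<in>F. card ((r - s) \<union> (s - r)) \<in> {0, 4, 6, 8})"

definition A :: "nat \<Rightarrow> nat \<Rightarrow> nat" where
  "A m n = Max (card ` {F. F \<subseteq> {r. r \<subseteq> {..<n} \<and> card r = m} \<and> sd_admissible F})"

end

theory Submission
  imports Defs
begin

lemma A_fin: "finite {F. F \<subseteq> {r. r \<subseteq> {..<n::nat} \<and> card r = m} \<and> sd_admissible F}"
proof -
  have "{F. F \<subseteq> {r. r \<subseteq> {..<n} \<and> card r = m} \<and> sd_admissible F} \<subseteq> Pow (Pow {..<n})"
    by auto
  then show ?thesis by (rule finite_subset) simp
qed

lemma A_bound: "A m n \<le> 2 ^ n"
  unfolding A_def
proof (rule Max.boundedI)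
  show "finite (card ` {F. F \<subseteq> {r. r \<subseteq> {..<n} \<and> card r = m} \<and> sd_admissible F})"
    using A_fin by blast
  have "{} \<in> {F. F \<subseteq> {r. r \<subseteq> {..<n} \<and> card r = m} \<and> sd_admissible F}"
    by (simp add: sd_admissible_def)
  then show "card ` {F. F \<subseteq> {r. r \<subseteq> {..<n} \<and> card r = m} \<and> sd_admissible F} \<noteq> {}" by blast
next
  fix a assume "a \<in> card ` {F. F \<subseteq> {r. r \<subseteq> {..<n} \<and> card r = m} \<and> sd_admissible F}"
  then obtain F where a: "a = card F" and F: "F \<subseteq> Pow {..<n}" by auto
  have "card F \<le> card (Pow {..<n::nat})" using F by (intro card_mono) auto
  then show "a \<le> 2 ^ n" using a by (simp add: card_Pow)
qed

lemma arith_aux: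
  fixes a b c m0 x :: nat
  assumes "a + b = 0 \<or> a + b = 4 \<or> a + b = 6 \<or> a + b = 8"
    and "x = a + c" and "m0 = b + c" and "m0 \<le> x"
  shows "x = m0 \<or> x = m0+2 \<or> x = m0+4 \<or> x = m0+6 \<or> x = m0+8"
  using assms by presburger

lemma A_ge:
  fixes S :: "'a set"
  assumes "finite S" "card S = n" "F \<subseteq> {r. r \<subseteq> S \<and> card r = m}" "sd_admissible F"
  shows "card F \<le> A m n"
proof -
  obtain f where f: "bij_betw f S {..<n}"
    using assms(1,2) by (metis card_lessThan finite_lessThan finite_same_card_bij)
  have inj: "inj_on f S" using f bij_betw_def by blast
  define G where "G = (image f) ` F"
  have injF: "inj_on (image f) F"
    proof (rule inj_onI)
    fix x y assume "x \<in> F" "y \<in> F" "f ` x = f ` y"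
    then show "x = y" using inj assms(3) inj_on_image_eq_iff[of f S x y] by auto
  qed
  have cG: "card G = card F" unfolding G_def using injF by (simp add: card_image)
  have sub: "G \<subseteq> {r. r \<subseteq> {..<n} \<and> card r = m}"
  proof
    fix x assume "x \<in> G"
    then obtain r where r: "r \<in> F" "x = f ` r" unfolding G_def by auto
    have rS: "r \<subseteq> S" "card r = m" using r assms(3) by auto
    have "card x = m" using r(2) rS card_image[OF inj_on_subset[OF inj rS(1)]] by simp
    moreover have "x \<subseteq> {..<n}" using r(2) rS(1) bij_betw_imp_surj_on[OF f] by blast
    ultimately show "x \<in> {r. r \<subseteq> {..<n} \<and> card r = m}" by simp
  qed
  have adm: "sd_admissible G"
    unfolding sd_admissible_def
  proof (intro ballI)
    fix x y assume "x \<in> G" "y \<in> G"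
    then obtain r s where rs: "r \<in> F" "s \<in> F" "x = f ` r" "y = f ` s" unfolding G_def by auto
    have rS: "r \<subseteq> S" "s \<subseteq> S" using rs assms(3) by auto
    have e: "(x - y) \<union> (y - x) = f ` ((r - s) \<union> (s - r))"
      using rs(3,4) inj_on_image_set_diff[OF inj, of r s] inj_on_image_set_diff[OF inj, of s r] rS
      by (auto simp: image_Un)
    have "card ((x - y) \<union> (y - x)) = card ((r - s) \<union> (s - r))"
      unfolding e using rS inj by (intro card_image) (auto intro: inj_on_subset)
    then show "card ((x - y) \<union> (y - x)) \<in> {0, 4, 6, 8}"
      using assms(4) rs unfolding sd_admissible_def by metis
  qed
  have "card G \<in> card ` {F. F \<subseteq> {r. r \<subseteq> {..<n} \<and> card r = m} \<and> sd_admissible F}"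
    using sub adm by blast
  then have "card G \<le> A m n" unfolding A_def using A_fin by (intro Max_ge) auto
  then show ?thesis using cG by simp
qed

theorem lemma4p3:
  fixes S :: "'a set" and \<S> :: "'a set set" and n :: nat
  assumes "finite S" and "card S = n"
    and "\<forall>r\<in>\<S>. r \<subseteq> S"
    and "sd_admissible \<S>"
  shows "card \<S> \<le> (SUP m. A m n + A (m+2) n + A (m+4) n + A (m+6) n + A (m+8) n)"
proof (cases "\<S> = {}")
  case True then show ?thesis by simp
next
  case False
  have finS: "finite \<S>" proof (rule finite_subset)
    show "\<S> \<subseteq> Pow S" using assms(3) by blast
  qed (use assms(1) in simp)
  define m0 where "m0 = Min (card ` \<S>)"
  obtain s where s: "s \<in> \<S>" "card s = m0"
    proof -
    have "m0 \<in> card ` \<S>" unfolding m0_def using False finS by (intro Min_in) auto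
    then show ?thesis using that by blast
  qed
  have key: "card r \<in> {m0, m0+2, m0+4, m0+6, m0+8}" if r: "r \<in> \<S>" for r
  proof -
    have ge: "m0 \<le> card r" unfolding m0_def using r finS by simp
    have fr: "finite r" "finite s" using r s assms(1,3) finite_subset by blast+
    have c1: "card r = card (r - s) + card (r \<inter> s)"
      using card_Int_Diff[OF fr(1), of s] by simp
    have c2: "card s = card (s - r) + card (r \<inter> s)"
      using card_Int_Diff[OF fr(2), of r] by (simp add: Int_commute)
    have c3: "card ((r - s) \<union> (s - r)) = card (r - s) + card (s - r)"
      using fr by (intro card_Un_disjoint) auto
    have "card ((r - s) \<union> (s - r)) \<in> {0, 4, 6, 8}"
      using assms(4) r s unfolding sd_admissible_def by blast
    then have d: "card (r - s) + card (s - r) = 0 \<or> card (r - s) + card (s - r) = 4 \<or> card (r - s) + card (s - r) = 6 \<or> card (r - s) + card (s - r) = 8"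
      using c3 by simp
    have "card r = m0 \<or> card r = m0+2 \<or> card r = m0+4 \<or> card r = m0+6 \<or> card r = m0+8"
      using arith_aux[OF d c1] c2 ge s(2) by simp
    then show ?thesis by simp
  qed
  define P where "P k = {r \<in> \<S>. card r = m0 + k}" for k
  have U: "\<S> = (\<Union>k\<in>{0,2,4,6,8::nat}. P k)"
  proof
    show "\<S> \<subseteq> (\<Union>k\<in>{0,2,4,6,8::nat}. P k)"
    proof
      fix r assume r: "r \<in> \<S>"
      then have "card r = m0 + 0 \<or> card r = m0 + 2 \<or> card r = m0 + 4 \<or> card r = m0 + 6 \<or> card r = m0 + 8"
        using key by simp
      then show "r \<in> (\<Union>k\<in>{0,2,4,6,8::nat}. P k)" using r unfolding P_def by blast
    qed
  qed (auto simp: P_def)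
  have Pk: "card (P k) \<le> A (m0 + k) n" for k
  proof (rule A_ge[OF assms(1,2)])
    show "P k \<subseteq> {r. r \<subseteq> S \<and> card r = m0 + k}" using assms(3) unfolding P_def by auto
    show "sd_admissible (P k)" using assms(4) unfolding P_def sd_admissible_def by blast
  qed
  have "card \<S> \<le> (\<Sum>k\<in>{0,2,4,6,8::nat}. card (P k))"
    by (subst U, rule card_UN_le) simp
  also have "\<dots> = card (P 0) + card (P 2) + card (P 4) + card (P 6) + card (P 8)" by simp
  also have "\<dots> \<le> A m0 n + A (m0+2) n + A (m0+4) n + A (m0+6) n + A (m0+8) n"
    using Pk[of 0, simplified] Pk[of 2] Pk[of 4] Pk[of 6] Pk[of 8] by linarith
  also have "\<dots> \<le> (SUP m. A m n + A (m+2) n + A (m+4) n + A (m+6) n + A (m+8) n)"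
  proof -
    define g where "g = (\<lambda>m. A m n + A (m+2) n + A (m+4) n + A (m+6) n + A (m+8) n)"
    have bdd: "bdd_above (range g)"
    proof (rule bdd_aboveI)
      fix x assume "x \<in> range g"
      then obtain m where "x = g m" by auto
      then show "x \<le> 5 * 2 ^ n"
        unfolding g_def
        using A_bound[of m n] A_bound[of "m+2" n] A_bound[of "m+4" n] A_bound[of "m+6" n] A_bound[of "m+8" n]
        by linarith
    qed
    have "g m0 \<le> (SUP m. g m)" using cSUP_upper[of m0 UNIV g] bdd by simp
    then show ?thesis unfolding g_def .
  qed
  finally show ?thesis .
qed

end
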